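(* There exists a unital, completely positive, idempotent linear map $\Phi:\ell^\infty(\mathbb Z)\to\ell^\infty(\mathbb Z)$ which is $\mathbb Z$-equivariant (i.e. $\Phi\circ B=B\circ\Phi$, where $(Bv)_n=v_{n+1}$ is the backward shift) and whose range is not a C*-subalgebra of $\ell^\infty(\mathbb Z)$.
   Context: $\ell^\infty(\mathbb Z)$ is the C*-algebra of bounded complex sequences indexed by $\mathbb Z$ with pointwise operations; $\mathbb Z$ acts on it by translation, generated by the backward shift $B$. *)

theory Defs
  imports "HOL-Analysis.Analysis"
begin

definition linf :: "(int \<Rightarrow> complex) set" where
  "linf = {f. \<exists>M. \<forall>n. norm (f n) \<le> M}"

definition bshift :: "(int \<Rightarrow> complex) \<Rightarrow> (int \<Rightarrow> complex)" where
  "bshift v = (\<lambda>n. v (n + 1))"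

definition linear_on_linf :: "((int \<Rightarrow> complex) \<Rightarrow> (int \<Rightarrow> complex)) \<Rightarrow> bool" where
  "linear_on_linf \<Phi> \<longleftrightarrow>
     (\<forall>x\<in>linf. \<Phi> x \<in> linf) \<and>
     (\<forall>x\<in>linf. \<forall>y\<in>linf. \<Phi> (\<lambda>n. x n + y n) = (\<lambda>n. \<Phi> x n + \<Phi> y n)) \<and>
     (\<forall>c::complex. \<forall>x\<in>linf. \<Phi> (\<lambda>n. c * x n) = (\<lambda>n. c * \<Phi> x n))"

text \<open>Positivity of an element of M_k(ell-infinity(Z)) = bounded M_k(C)-valued functions on Z
  (entries x i j, i,j < k): positive semidefinite at every point of Z.\<close>
definition mat_pos :: "nat \<Rightarrow> (nat \<Rightarrow> nat \<Rightarrow> int \<Rightarrow> complex) \<Rightarrow> bool" where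
  "mat_pos k x \<longleftrightarrow>
     (\<forall>m. \<forall>v :: nat \<Rightarrow> complex.
        Im (\<Sum>i<k. \<Sum>j<k. cnj (v i) * x i j m * v j) = 0 \<and>
        Re (\<Sum>i<k. \<Sum>j<k. cnj (v i) * x i j m * v j) \<ge> 0)"

definition completely_positive :: "((int \<Rightarrow> complex) \<Rightarrow> (int \<Rightarrow> complex)) \<Rightarrow> bool" where
  "completely_positive \<Phi> \<longleftrightarrow>
     (\<forall>k. \<forall>x :: nat \<Rightarrow> nat \<Rightarrow> int \<Rightarrow> complex.
        (\<forall>i<k. \<forall>j<k. x i j \<in> linf) \<longrightarrow> mat_pos k x \<longrightarrow> mat_pos k (\<lambda>i j. \<Phi> (x i j)))"

definition cstar_subalgebra :: "(int \<Rightarrow> complex) set \<Rightarrow> bool" where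
  "cstar_subalgebra S \<longleftrightarrow>
     S \<subseteq> linf \<and>
     (\<lambda>n. 0) \<in> S \<and>
     (\<forall>x\<in>S. \<forall>y\<in>S. (\<lambda>n. x n + y n) \<in> S) \<and>
     (\<forall>c::complex. \<forall>x\<in>S. (\<lambda>n. c * x n) \<in> S) \<and>
     (\<forall>x\<in>S. \<forall>y\<in>S. (\<lambda>n. x n * y n) \<in> S) \<and>
     (\<forall>x\<in>S. (\<lambda>n. cnj (x n)) \<in> S) \<and>
     (\<forall>s :: nat \<Rightarrow> int \<Rightarrow> complex. \<forall>f\<in>linf.
        (\<forall>k. s k \<in> S) \<and> (\<forall>e>0. \<exists>N. \<forall>k\<ge>N. \<forall>n. norm (s k n - f n) \<le> e) \<longrightarrow> f \<in> S)"

end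

theory Submission
  imports Defs
begin

definition ultra :: "int filter \<Rightarrow> bool" where
  "ultra F \<longleftrightarrow> F \<noteq> bot \<and> (\<forall>P. eventually P F \<or> eventually (\<lambda>x. \<not> P x) F)"

lemma ultra_not_ev: "ultra F \<Longrightarrow> \<not> eventually P F \<Longrightarrow> eventually (\<lambda>x. \<not> P x) F"
  unfolding ultra_def by blast

lemma ultra_not_both: "ultra F \<Longrightarrow> eventually P F \<Longrightarrow> eventually (\<lambda>x. \<not> P x) F \<Longrightarrow> False"
proof -
  assume u: "ultra F" and a: "eventually P F" and b: "eventually (\<lambda>x. \<not> P x) F"
  have "eventually (\<lambda>x. False) F" using eventually_conj[OF a b] by (rule eventually_mono) auto
  with u show False by (simp add: ultra_def eventually_False)
qed

lemma ultra_le_eq: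
  assumes "ultra A" "ultra B" "A \<le> B" shows "A = B"
proof (rule antisym[OF assms(3)])
  show "B \<le> A"
  proof (rule filter_leI)
    fix P assume "eventually P A"
    show "eventually P B"
    proof (rule ccontr)
      assume "\<not> eventually P B"
      then have "eventually (\<lambda>x. \<not> P x) B" using ultra_not_ev assms(2) by blast
      then have "eventually (\<lambda>x. \<not> P x) A" using assms(3) filter_leD by blast
      then show False using ultra_not_both[OF assms(1) \<open>eventually P A\<close>] by blast
    qed
  qed
qed

lemma ultra_exists:
  fixes F :: "int filter"
  assumes F: "F \<noteq> bot"
  shows "\<exists>U. ultra U \<and> U \<le> F"
proof -
  define A where "A = {{P. eventually P G} | G. G \<noteq> bot \<and> G \<le> F}"
  have "\<exists>M\<in>A. \<forall>X\<in>A. M \<subseteq> X \<longrightarrow> X = M"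
  proof (rule subset_Zorn)
    fix C assume ch: "subset.chain A C"
    show "\<exists>U\<in>A. \<forall>X\<in>C. X \<subseteq> U"
    proof (cases "C = {}")
      case True
      then show ?thesis using F unfolding A_def by blast
    next
      case False
      have CA: "C \<subseteq> A" and tot: "\<And>X Y. X \<in> C \<Longrightarrow> Y \<in> C \<Longrightarrow> X \<subseteq> Y \<or> Y \<subseteq> X"
        using ch unfolding subset_chain_def by auto
      have memA: "X \<in> A \<Longrightarrow> \<exists>G. G \<noteq> bot \<and> G \<le> F \<and> X = {P. eventually P G}" for X
        unfolding A_def by blast
      define G where "G = Abs_filter (\<lambda>P. \<exists>X\<in>C. P \<in> X)"
      have isf: "is_filter (\<lambda>P. \<exists>X\<in>C. P \<in> X)"
      proof
        obtain X where "X \<in> C" using False by blast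
        then obtain G0 where "X = {P. eventually P G0}" using memA CA by blast
        then have "(\<lambda>x. True) \<in> X" by simp
        then show "\<exists>X\<in>C. (\<lambda>x. True) \<in> X" using \<open>X \<in> C\<close> by blast
      next
        fix P Q assume "\<exists>X\<in>C. P \<in> X" "\<exists>X\<in>C. Q \<in> X"
        then obtain X Y where XY: "X \<in> C" "Y \<in> C" "P \<in> X" "Q \<in> Y" by blast
        from tot[OF XY(1,2)] obtain Z where Z: "Z \<in> C" "P \<in> Z" "Q \<in> Z" using XY by blast
        then obtain G0 where "Z = {P. eventually P G0}" using memA CA by blast
        then have "eventually P G0" "eventually Q G0" using Z by blast+
        then have "eventually (\<lambda>x. P x \<and> Q x) G0" by (rule eventually_conj)
        then have "(\<lambda>x. P x \<and> Q x) \<in> Z" using \<open>Z = {P. eventually P G0}\<close> by blast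
        then show "\<exists>X\<in>C. (\<lambda>x. P x \<and> Q x) \<in> X" using Z by blast
      next
        fix P Q assume "\<forall>x. P x \<longrightarrow> Q x" "\<exists>X\<in>C. P \<in> X"
        then obtain X where X: "X \<in> C" "P \<in> X" by blast
        then obtain G0 where "X = {P. eventually P G0}" using memA CA by blast
        then have "eventually P G0" using X by blast
        then have "eventually Q G0" using \<open>\<forall>x. P x \<longrightarrow> Q x\<close> eventually_mono by blast
        then have "Q \<in> X" using \<open>X = {P. eventually P G0}\<close> by blast
        then show "\<exists>X\<in>C. Q \<in> X" using X by blast
      qed
      have evG: "eventually P G \<longleftrightarrow> (\<exists>X\<in>C. P \<in> X)" for P
        unfolding G_def using eventually_Abs_filter[OF isf] .
      have "G \<noteq> bot"
      proof
        assume "G = bot"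
        then have "eventually (\<lambda>x. False) G" by simp
        then obtain X where X: "X \<in> C" "(\<lambda>x. False) \<in> X" using evG by blast
        then obtain G0 where "G0 \<noteq> bot" "X = {P. eventually P G0}" using memA CA by blast
        then show False using X by (simp add: eventually_False)
      qed
      moreover have "G \<le> F"
      proof (rule filter_leI)
        fix P assume "eventually P F"
        obtain X where "X \<in> C" using False by blast
        then obtain G0 where "G0 \<le> F" "X = {P. eventually P G0}" using memA CA by blast
        then have "eventually P G0" using filter_leD \<open>eventually P F\<close> by blast
        then have "P \<in> X" using \<open>X = {P. eventually P G0}\<close> by blast
        then show "eventually P G" using evG \<open>X \<in> C\<close> by blast
      qed
      ultimately have "{P. eventually P G} \<in> A" unfolding A_def by blast
      moreover have "\<forall>X\<in>C. X \<subseteq> {P. eventually P G}" using evG by blast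
      ultimately show ?thesis by blast
    qed
  qed
  then obtain M where MA: "M \<in> A" and Mmax: "\<forall>X\<in>A. M \<subseteq> X \<longrightarrow> X = M" by blast
  then obtain G where G: "G \<noteq> bot" "G \<le> F" "M = {P. eventually P G}" unfolding A_def by blast
  have "ultra G"
    unfolding ultra_def
  proof (intro conjI allI G(1))
    fix P
    show "eventually P G \<or> eventually (\<lambda>x. \<not> P x) G"
    proof (rule disjCI)
      assume "\<not> eventually (\<lambda>x. \<not> P x) G"
      define G' where "G' = inf G (principal {x. P x})"
      have "G' \<noteq> bot"
      proof
        assume "G' = bot"
        then have "eventually (\<lambda>x. False) G'" by simp
        then have "eventually (\<lambda>x. \<not> P x) G"
          unfolding G'_def eventually_inf_principal by (rule eventually_mono) auto
        with \<open>\<not> eventually (\<lambda>x. \<not> P x) G\<close> show False by blast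
      qed
      moreover have "G' \<le> F" using G(2) unfolding G'_def by (meson inf.coboundedI1)
      ultimately have "{Q. eventually Q G'} \<in> A" unfolding A_def by blast
      moreover have "M \<subseteq> {Q. eventually Q G'}" using G(3) unfolding G'_def
        by (auto intro: filter_leD[OF inf.cobounded1])
      ultimately have "{Q. eventually Q G'} = M" using Mmax by blast
      moreover have "eventually P G'" unfolding G'_def by (simp add: eventually_inf_principal)
      ultimately show "eventually P G" using G(3) by blast
    qed
  qed
  then show ?thesis using G by blast
qed


definition fsum :: "int filter \<Rightarrow> int filter \<Rightarrow> int filter" where
  "fsum F G = Abs_filter (\<lambda>P. eventually (\<lambda>n. eventually (\<lambda>m. P (n+m)) G) F)"

lemma eventually_fsum:
  "eventually P (fsum F G) \<longleftrightarrow> eventually (\<lambda>n. eventually (\<lambda>m. P (n+m)) G) F"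
proof -
  have "is_filter (\<lambda>P. eventually (\<lambda>n. eventually (\<lambda>m. P (n+m)) G) F)"
  proof
    show "eventually (\<lambda>n. eventually (\<lambda>m. True) G) F" by simp
  next
    fix P Q
    assume a: "eventually (\<lambda>n. eventually (\<lambda>m. P (n+m)) G) F"
      and b: "eventually (\<lambda>n. eventually (\<lambda>m. Q (n+m)) G) F"
    show "eventually (\<lambda>n. eventually (\<lambda>m. P (n+m) \<and> Q (n+m)) G) F"
      using eventually_conj[OF a b]
    proof (rule eventually_mono)
      fix n assume "eventually (\<lambda>m. P (n+m)) G \<and> eventually (\<lambda>m. Q (n+m)) G"
      then show "eventually (\<lambda>m. P (n+m) \<and> Q (n+m)) G"
        using eventually_conj by blast
    qed
  next
    fix P Q
    assume pq: "\<forall>x. P x \<longrightarrow> Q x" and a: "eventually (\<lambda>n. eventually (\<lambda>m. P (n+m)) G) F"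
    show "eventually (\<lambda>n. eventually (\<lambda>m. Q (n+m)) G) F"
      using a
    proof (rule eventually_mono)
      fix n assume "eventually (\<lambda>m. P (n+m)) G"
      then show "eventually (\<lambda>m. Q (n+m)) G"
        by (rule eventually_mono) (simp add: pq)
    qed
  qed
  then show ?thesis unfolding fsum_def by (rule eventually_Abs_filter)
qed

lemma ultra_fsum:
  assumes F: "ultra F" and G: "ultra G" shows "ultra (fsum F G)"
  unfolding ultra_def
proof (intro conjI allI)
  show "fsum F G \<noteq> bot"
  proof
    assume "fsum F G = bot"
    then have "eventually (\<lambda>x. False) (fsum F G)" by simp
    then have "eventually (\<lambda>n. eventually (\<lambda>m. False) G) F" by (simp add: eventually_fsum)
    moreover have "G \<noteq> bot" using G by (simp add: ultra_def)
    ultimately have "eventually (\<lambda>n. False) F" by simp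
    then show False using F by (simp add: ultra_def eventually_False)
  qed
next
  fix P
  show "eventually P (fsum F G) \<or> eventually (\<lambda>x. \<not> P x) (fsum F G)"
  proof (rule disjCI)
    assume "\<not> eventually (\<lambda>x. \<not> P x) (fsum F G)"
    then have "\<not> eventually (\<lambda>n. eventually (\<lambda>m. \<not> P (n+m)) G) F" by (simp add: eventually_fsum)
    then have "eventually (\<lambda>n. \<not> eventually (\<lambda>m. \<not> P (n+m)) G) F" using F ultra_not_ev by blast
    then have "eventually (\<lambda>n. eventually (\<lambda>m. P (n+m)) G) F"
    proof (rule eventually_mono)
      fix n assume "\<not> eventually (\<lambda>m. \<not> P (n+m)) G"
      then have "eventually (\<lambda>m. \<not> \<not> P (n+m)) G" using G ultra_not_ev by blast
      then show "eventually (\<lambda>m. P (n+m)) G" by simp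
    qed
    then show "eventually P (fsum F G)" by (simp add: eventually_fsum)
  qed
qed

lemma fsum_assoc: "fsum (fsum F G) H = fsum F (fsum G H)"
  unfolding filter_eq_iff by (simp add: eventually_fsum add.assoc)

definition Ucl :: "int filter set \<Rightarrow> bool" where
  "Ucl S \<longleftrightarrow> (\<forall>U\<in>S. ultra U) \<and>
     (\<forall>U. ultra U \<longrightarrow> (\<forall>P. (\<forall>V\<in>S. eventually P V) \<longrightarrow> eventually P U) \<longrightarrow> U \<in> S)"

lemma UclD1: "Ucl S \<Longrightarrow> U \<in> S \<Longrightarrow> ultra U"
  unfolding Ucl_def by blast

lemma UclD2: "Ucl S \<Longrightarrow> ultra U \<Longrightarrow> (\<And>P. (\<forall>V\<in>S. eventually P V) \<Longrightarrow> eventually P U) \<Longrightarrow> U \<in> S"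
  unfolding Ucl_def by blast

lemma Ucl_Inter:
  assumes "\<C> \<noteq> {}" "\<forall>T\<in>\<C>. Ucl T" shows "Ucl (\<Inter>\<C>)"
  unfolding Ucl_def
proof (intro conjI allI impI ballI)
  fix U assume "U \<in> \<Inter>\<C>"
  obtain T where "T \<in> \<C>" using assms(1) by blast
  then show "ultra U" using \<open>U \<in> \<Inter>\<C>\<close> assms(2) UclD1 by blast
next
  fix U
  assume U: "ultra U" and h: "\<forall>P. (\<forall>V\<in>\<Inter>\<C>. eventually P V) \<longrightarrow> eventually P U"
  show "U \<in> \<Inter>\<C>"
  proof (rule InterI)
  fix T assume T: "T \<in> \<C>"
  show "U \<in> T"
  proof (rule UclD2)
    show "Ucl T" using T assms(2) by blast
    show "ultra U" by fact
    fix P assume "\<forall>V\<in>T. eventually P V"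
    then have "\<forall>V\<in>\<Inter>\<C>. eventually P V" using T by blast
    then show "eventually P U" using h by blast
  qed
  qed
qed

lemma Ucl_Int: "Ucl A \<Longrightarrow> Ucl B \<Longrightarrow> Ucl (A \<inter> B)"
  using Ucl_Inter[of "{A, B}"] by simp

lemma filter_top_not_bot: "(top :: int filter) \<noteq> bot"
proof
  assume "(top :: int filter) = bot"
  then have "eventually (\<lambda>x::int. False) top" by simp
  then show False by simp
qed

lemma Ucl_compact:
  assumes ne: "\<C> \<noteq> {}" and cl: "\<forall>T\<in>\<C>. Ucl T \<and> T \<noteq> {}"
    and ch: "\<forall>A\<in>\<C>. \<forall>B\<in>\<C>. A \<subseteq> B \<or> B \<subseteq> A"
  shows "\<Inter>\<C> \<noteq> {}"
proof -
  define F where "F = (INF b\<in>\<C>. Sup b)"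
  have "F \<noteq> bot" unfolding F_def
  proof (rule INF_filter_not_bot)
    fix X assume X: "X \<subseteq> \<C>" "finite X"
    show "(INF b\<in>X. Sup b) \<noteq> bot"
    proof (cases "X = {}")
      case True
      then show ?thesis using filter_top_not_bot by simp
    next
      case False
      have "subset.chain UNIV X" unfolding subset_chain_def using X ch by blast
      then have "\<Inter>X \<in> X" using Inter_in_chain X(2) False by blast
      then have "\<Inter>X \<noteq> {}" using X cl by blast
      then obtain U where U: "U \<in> \<Inter>X" by blast
      have "ultra U" using U False X cl UclD1 by blast
      have "U \<le> (INF b\<in>X. Sup b)"
      proof (rule INF_greatest)
        fix b assume "b \<in> X" then show "U \<le> Sup b" using U by (simp add: Sup_upper)
      qed
      show ?thesis
      proof
        assume "(INF b\<in>X. Sup b) = bot"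
        then have "U = bot" using \<open>U \<le> (INF b\<in>X. Sup b)\<close> le_bot by metis
        then show False using \<open>ultra U\<close> unfolding ultra_def by blast
      qed
    qed
  qed
  then obtain U where U: "ultra U" "U \<le> F" using ultra_exists by blast
  have "U \<in> T" if T: "T \<in> \<C>" for T
  proof (rule UclD2)
    show "Ucl T" using T cl by blast
    show "ultra U" by fact
    fix P assume "\<forall>V\<in>T. eventually P V"
    then have "eventually P (Sup T)" by (simp add: eventually_Sup)
    moreover have "U \<le> Sup T" using U(2) T unfolding F_def by (meson INF_lower order_trans)
    ultimately show "eventually P U" using filter_leD by blast
  qed
  then show ?thesis by blast
qed

lemma Ucl_image:
  assumes S: "Ucl S" and p: "ultra p"
  shows "Ucl ((\<lambda>q. fsum q p) ` S)"
  unfolding Ucl_def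
proof (intro conjI allI impI ballI)
  fix V assume "V \<in> (\<lambda>q. fsum q p) ` S"
  then show "ultra V" using ultra_fsum p S UclD1 by blast
next
  fix U assume U: "ultra U"
    and h: "\<forall>P. (\<forall>V\<in>(\<lambda>q. fsum q p) ` S. eventually P V) \<longrightarrow> eventually P U"
  define KP where "KP = (\<lambda>Q. \<exists>P. eventually P U \<and> (\<forall>n. eventually (\<lambda>m. P (n+m)) p \<longrightarrow> Q n))"
  have isf: "is_filter KP" unfolding KP_def
  proof
    show "\<exists>P. eventually P U \<and> (\<forall>n. eventually (\<lambda>m. P (n + m)) p \<longrightarrow> True)"
      by (rule exI[of _ "\<lambda>x. True"]) simp
  next
    fix Q1 Q2
    assume "\<exists>P. eventually P U \<and> (\<forall>n. eventually (\<lambda>m. P (n + m)) p \<longrightarrow> Q1 n)"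
      and "\<exists>P. eventually P U \<and> (\<forall>n. eventually (\<lambda>m. P (n + m)) p \<longrightarrow> Q2 n)"
    then obtain P1 P2 where P1: "eventually P1 U" "\<forall>n. eventually (\<lambda>m. P1 (n + m)) p \<longrightarrow> Q1 n"
      and P2: "eventually P2 U" "\<forall>n. eventually (\<lambda>m. P2 (n + m)) p \<longrightarrow> Q2 n" by blast
    show "\<exists>P. eventually P U \<and> (\<forall>n. eventually (\<lambda>m. P (n + m)) p \<longrightarrow> Q1 n \<and> Q2 n)"
    proof (intro exI conjI allI impI)
      show "eventually (\<lambda>x. P1 x \<and> P2 x) U" using P1(1) P2(1) by (rule eventually_conj)
      fix n assume a: "eventually (\<lambda>m. P1 (n + m) \<and> P2 (n + m)) p"
      have "eventually (\<lambda>m. P1 (n + m)) p" using a by (rule eventually_mono) simp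
      then show "Q1 n" using P1(2) by blast
      have "eventually (\<lambda>m. P2 (n + m)) p" using a by (rule eventually_mono) simp
      then show "Q2 n" using P2(2) by blast
    qed
  next
    fix Q1 Q2
    assume "\<forall>x. Q1 x \<longrightarrow> Q2 x" "\<exists>P. eventually P U \<and> (\<forall>n. eventually (\<lambda>m. P (n + m)) p \<longrightarrow> Q1 n)"
    then show "\<exists>P. eventually P U \<and> (\<forall>n. eventually (\<lambda>m. P (n + m)) p \<longrightarrow> Q2 n)" by blast
  qed
  define K where "K = Abs_filter KP"
  have evK: "eventually Q K \<longleftrightarrow> KP Q" for Q unfolding K_def using eventually_Abs_filter[OF isf] .
  define G where "G = inf (Sup S) K"
  have "G \<noteq> bot"
  proof
    assume "G = bot"
    then have "eventually (\<lambda>x. False) G" by simp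
    then obtain Q R where QR: "eventually Q (Sup S)" "eventually R K" "\<forall>x. Q x \<and> R x \<longrightarrow> False"
      unfolding G_def eventually_inf by blast
    from QR(2) obtain P where P: "eventually P U" "\<forall>n. eventually (\<lambda>m. P (n+m)) p \<longrightarrow> R n"
      unfolding evK KP_def by blast
    have "\<forall>V\<in>(\<lambda>q. fsum q p) ` S. eventually (\<lambda>x. \<not> P x) V"
    proof
      fix V assume "V \<in> (\<lambda>q. fsum q p) ` S"
      then obtain q where q: "q \<in> S" "V = fsum q p" by blast
      have "eventually Q q" using QR(1) q(1) by (simp add: eventually_Sup)
      then have "eventually (\<lambda>n. eventually (\<lambda>m. \<not> P (n+m)) p) q"
      proof (rule eventually_mono)
        fix n assume "Q n"
        then have "\<not> R n" using QR(3) by blast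
        then have "\<not> eventually (\<lambda>m. P (n+m)) p" using P(2) by blast
        then show "eventually (\<lambda>m. \<not> P (n+m)) p" using p ultra_not_ev by blast
      qed
      then show "eventually (\<lambda>x. \<not> P x) V" using q(2) by (simp add: eventually_fsum)
    qed
    then have "eventually (\<lambda>x. \<not> P x) U" using h by blast
    then show False using ultra_not_both[OF U P(1)] by blast
  qed
  then obtain q where q: "ultra q" "q \<le> G" using ultra_exists by blast
  have "q \<le> Sup S" using q(2) unfolding G_def by (meson inf.boundedE)
  have qS: "q \<in> S"
  proof (rule UclD2[OF S q(1)])
    fix P assume "\<forall>V\<in>S. eventually P V"
    then have "eventually P (Sup S)" by (simp add: eventually_Sup)
    then show "eventually P q" using \<open>q \<le> Sup S\<close> filter_leD by blast
  qed
  have "q \<le> K" using q(2) unfolding G_def by (meson inf.boundedE)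
  have "fsum q p \<le> U"
  proof (rule filter_leI)
    fix P assume "eventually P U"
    then have "KP (\<lambda>n. eventually (\<lambda>m. P (n+m)) p)" unfolding KP_def by blast
    then have "eventually (\<lambda>n. eventually (\<lambda>m. P (n+m)) p) K" using evK by blast
    then have "eventually (\<lambda>n. eventually (\<lambda>m. P (n+m)) p) q" using \<open>q \<le> K\<close> filter_leD by blast
    then show "eventually P (fsum q p)" by (simp add: eventually_fsum)
  qed
  then have "fsum q p = U" using ultra_le_eq ultra_fsum[OF q(1) p] U by blast
  then show "U \<in> (\<lambda>q. fsum q p) ` S" using qS by blast
qed

lemma Ucl_fix:
  assumes S: "Ucl S" and p: "ultra p"
  shows "Ucl {q\<in>S. fsum q p = p}"
  unfolding Ucl_def
proof (intro conjI allI impI ballI)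
  fix V assume "V \<in> {q\<in>S. fsum q p = p}" then show "ultra V" using S UclD1 by blast
next
  fix U assume U: "ultra U"
    and h: "\<forall>P. (\<forall>V\<in>{q\<in>S. fsum q p = p}. eventually P V) \<longrightarrow> eventually P U"
  have "U \<in> S"
  proof (rule UclD2[OF S U])
    fix P assume "\<forall>V\<in>S. eventually P V"
    then show "eventually P U" using h by blast
  qed
  moreover have "fsum U p \<le> p"
  proof (rule filter_leI)
    fix P assume "eventually P p"
    have "\<forall>V\<in>{q\<in>S. fsum q p = p}. eventually (\<lambda>n. eventually (\<lambda>m. P (n+m)) p) V"
    proof
      fix V assume "V \<in> {q\<in>S. fsum q p = p}"
      then have "fsum V p = p" by blast
      then have "eventually P (fsum V p)" using \<open>eventually P p\<close> by simp
      then show "eventually (\<lambda>n. eventually (\<lambda>m. P (n+m)) p) V" by (simp add: eventually_fsum)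
    qed
    then have "eventually (\<lambda>n. eventually (\<lambda>m. P (n+m)) p) U" using h by blast
    then show "eventually P (fsum U p)" by (simp add: eventually_fsum)
  qed
  then have "fsum U p = p" using ultra_le_eq ultra_fsum[OF U p] p by blast
  ultimately show "U \<in> {q\<in>S. fsum q p = p}" by blast
qed


lemma Ucl_minimal:
  assumes S0: "Q S0" and QD: "\<And>T. Q T \<Longrightarrow> T \<noteq> {} \<and> Ucl T"
    and QI: "\<And>\<C>. \<C> \<noteq> {} \<Longrightarrow> \<forall>T\<in>\<C>. Q T \<Longrightarrow> \<forall>A\<in>\<C>. \<forall>B\<in>\<C>. A \<subseteq> B \<or> B \<subseteq> A
              \<Longrightarrow> \<Inter>\<C> \<noteq> {} \<Longrightarrow> Ucl (\<Inter>\<C>) \<Longrightarrow> Q (\<Inter>\<C>)"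
  shows "\<exists>M. Q M \<and> M \<subseteq> S0 \<and> (\<forall>T. Q T \<longrightarrow> T \<subseteq> M \<longrightarrow> T = M)"
proof -
  define A where "A = {- T | T. Q T \<and> T \<subseteq> S0}"
  have "\<exists>M\<in>A. \<forall>X\<in>A. M \<subseteq> X \<longrightarrow> X = M"
  proof (rule subset_Zorn)
    fix C assume ch: "subset.chain A C"
    show "\<exists>U\<in>A. \<forall>X\<in>C. X \<subseteq> U"
    proof (cases "C = {}")
      case True
      have "- S0 \<in> A" unfolding A_def using S0 by blast
      then show ?thesis using True by blast
    next
      case False
      have CA: "C \<subseteq> A" and tot: "\<And>X Y. X \<in> C \<Longrightarrow> Y \<in> C \<Longrightarrow> X \<subseteq> Y \<or> Y \<subseteq> X"
        using ch unfolding subset_chain_def by auto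
      define \<C> where "\<C> = uminus ` C"
      have C1: "\<C> \<noteq> {}" unfolding \<C>_def using False by blast
      have C2: "\<forall>T\<in>\<C>. Q T \<and> T \<subseteq> S0"
      proof
        fix T assume "T \<in> \<C>"
        then obtain X where X: "X \<in> C" "T = - X" unfolding \<C>_def by blast
        then have "X \<in> A" using CA by blast
        then obtain T' where "X = - T'" "Q T'" "T' \<subseteq> S0" unfolding A_def by blast
        then show "Q T \<and> T \<subseteq> S0" using X by simp
      qed
      have C3: "\<forall>A\<in>\<C>. \<forall>B\<in>\<C>. A \<subseteq> B \<or> B \<subseteq> A"
        unfolding \<C>_def using tot by blast
      have C4: "\<forall>T\<in>\<C>. Ucl T \<and> T \<noteq> {}" using C2 QD by blast
      have ne: "\<Inter>\<C> \<noteq> {}" using Ucl_compact[OF C1 C4 C3] .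
      have ucl: "Ucl (\<Inter>\<C>)" using Ucl_Inter C1 C4 by blast
      have "Q (\<Inter>\<C>)" using QI[OF C1 _ C3 ne ucl] C2 by blast
      moreover have "\<Inter>\<C> \<subseteq> S0" using C1 C2 by blast
      ultimately have "- \<Inter>\<C> \<in> A" unfolding A_def by blast
      moreover have "\<forall>X\<in>C. X \<subseteq> - \<Inter>\<C>" unfolding \<C>_def by blast
      ultimately show ?thesis by blast
    qed
  qed
  then obtain M' where M'A: "M' \<in> A" and max: "\<forall>X\<in>A. M' \<subseteq> X \<longrightarrow> X = M'" by blast
  then obtain M where M: "M' = - M" "Q M" "M \<subseteq> S0" unfolding A_def by blast
  have "\<forall>T. Q T \<longrightarrow> T \<subseteq> M \<longrightarrow> T = M"
  proof (intro allI impI)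
    fix T assume "Q T" "T \<subseteq> M"
    then have "- T \<in> A" unfolding A_def using M(3) by blast
    moreover have "M' \<subseteq> - T" using M(1) \<open>T \<subseteq> M\<close> by blast
    ultimately have "- T = M'" using max by blast
    then show "T = M" using M(1) by simp
  qed
  then show ?thesis using M by blast
qed

lemma Ellis:
  assumes S: "Ucl S" "S \<noteq> {}" "\<forall>a\<in>S. \<forall>b\<in>S. fsum a b \<in> S"
  shows "\<exists>e\<in>S. fsum e e = e"
proof -
  define Q where "Q = (\<lambda>T. T \<noteq> {} \<and> Ucl T \<and> (\<forall>a\<in>T. \<forall>b\<in>T. fsum a b \<in> T))"
  have "\<exists>M. Q M \<and> M \<subseteq> S \<and> (\<forall>T. Q T \<longrightarrow> T \<subseteq> M \<longrightarrow> T = M)"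
  proof (rule Ucl_minimal)
    show "Q S" unfolding Q_def using S by blast
    show "\<And>T. Q T \<Longrightarrow> T \<noteq> {} \<and> Ucl T" unfolding Q_def by blast
    fix \<C> :: "int filter set set"
    assume "\<forall>T\<in>\<C>. Q T" "\<Inter>\<C> \<noteq> {}" "Ucl (\<Inter>\<C>)"
    then show "Q (\<Inter>\<C>)" unfolding Q_def by blast
  qed
  then obtain M where M: "Q M" "M \<subseteq> S" and min: "\<forall>T. Q T \<longrightarrow> T \<subseteq> M \<longrightarrow> T = M" by blast
  have Mne: "M \<noteq> {}" and Mcl: "Ucl M" and Msg: "\<forall>a\<in>M. \<forall>b\<in>M. fsum a b \<in> M"
    using M(1) unfolding Q_def by auto
  obtain p where p: "p \<in> M" using Mne by blast
  have up: "ultra p" using Mcl p UclD1 by blast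
  define M' where "M' = (\<lambda>q. fsum q p) ` M"
  have "Q M'" unfolding Q_def
  proof (intro conjI)
    show "M' \<noteq> {}" unfolding M'_def using Mne by blast
    show "Ucl M'" unfolding M'_def using Ucl_image[OF Mcl up] .
    show "\<forall>a\<in>M'. \<forall>b\<in>M'. fsum a b \<in> M'"
    proof (intro ballI)
      fix a b assume "a \<in> M'" "b \<in> M'"
      then obtain a' b' where ab: "a' \<in> M" "b' \<in> M" "a = fsum a' p" "b = fsum b' p"
        unfolding M'_def by blast
      have "fsum a b = fsum (fsum (fsum a' p) b') p" using ab by (simp add: fsum_assoc)
      moreover have "fsum (fsum a' p) b' \<in> M" using Msg ab p by blast
      ultimately show "fsum a b \<in> M'" unfolding M'_def by blast
    qed
  qed
  moreover have "M' \<subseteq> M" unfolding M'_def using Msg p by blast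
  ultimately have "M' = M" using min by blast
  then have "p \<in> (\<lambda>q. fsum q p) ` M" using p unfolding M'_def by simp
  then obtain q where q: "q \<in> M" "fsum q p = p" by (metis imageE)
  define T where "T = {q\<in>M. fsum q p = p}"
  have "Q T" unfolding Q_def
  proof (intro conjI)
    show "T \<noteq> {}" unfolding T_def using q by blast
    show "Ucl T" unfolding T_def using Ucl_fix[OF Mcl up] .
    show "\<forall>a\<in>T. \<forall>b\<in>T. fsum a b \<in> T"
    proof (intro ballI)
      fix a b assume "a \<in> T" "b \<in> T"
      then have ab: "a \<in> M" "b \<in> M" "fsum a p = p" "fsum b p = p" unfolding T_def by auto
      have "fsum (fsum a b) p = p" using ab by (simp add: fsum_assoc)
      moreover have "fsum a b \<in> M" using ab Msg by blast
      ultimately show "fsum a b \<in> T" unfolding T_def by blast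
    qed
  qed
  moreover have "T \<subseteq> M" unfolding T_def by blast
  ultimately have "T = M" using min by blast
  then have "fsum p p = p" using p unfolding T_def by blast
  then show ?thesis using p M(2) by blast
qed

lemma left_zero_pair:
  assumes H: "Ucl H" "\<forall>a\<in>H. \<forall>b\<in>H. fsum a b \<in> H"
    and H1: "H1 \<subseteq> H" "Ucl H1" "H1 \<noteq> {}" "\<forall>a\<in>H1. \<forall>b\<in>H. fsum a b \<in> H1"
    and H2: "H2 \<subseteq> H" "Ucl H2" "H2 \<noteq> {}" "\<forall>a\<in>H2. \<forall>b\<in>H. fsum a b \<in> H2"
  shows "\<exists>p1\<in>H1. \<exists>p2\<in>H2. fsum p1 p2 = p1 \<and> fsum p2 p1 = p2"
proof -
  define Q where "Q = (\<lambda>L. L \<noteq> {} \<and> Ucl L \<and> L \<subseteq> H \<and> (\<forall>a\<in>H. \<forall>b\<in>L. fsum a b \<in> L))"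
  have "\<exists>M. Q M \<and> M \<subseteq> H \<and> (\<forall>T. Q T \<longrightarrow> T \<subseteq> M \<longrightarrow> T = M)"
  proof (rule Ucl_minimal)
    show "Q H" unfolding Q_def using H H1 by blast
    show "\<And>T. Q T \<Longrightarrow> T \<noteq> {} \<and> Ucl T" unfolding Q_def by blast
    fix \<C> :: "int filter set set"
    assume "\<C> \<noteq> {}" "\<forall>T\<in>\<C>. Q T" "\<Inter>\<C> \<noteq> {}" "Ucl (\<Inter>\<C>)"
    then show "Q (\<Inter>\<C>)" unfolding Q_def by blast
  qed
  then obtain L where L: "Q L" and min: "\<forall>T. Q T \<longrightarrow> T \<subseteq> L \<longrightarrow> T = L" by blast
  have Lne: "L \<noteq> {}" and Lcl: "Ucl L" and LH: "L \<subseteq> H" and Lid: "\<forall>a\<in>H. \<forall>b\<in>L. fsum a b \<in> L"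
    using L unfolding Q_def by auto
  have gen: "\<exists>s\<in>H. l = fsum s e" if e: "e \<in> L" and l: "l \<in> L" for e l
  proof -
    have ue: "ultra e" using e Lcl UclD1 by blast
    define L' where "L' = (\<lambda>q. fsum q e) ` H"
    have "Q L'" unfolding Q_def
    proof (intro conjI)
      show "L' \<noteq> {}" unfolding L'_def using H1 by blast
      show "Ucl L'" unfolding L'_def using Ucl_image[OF H(1) ue] .
      show "L' \<subseteq> H" unfolding L'_def using H(2) e LH by blast
      show "\<forall>a\<in>H. \<forall>b\<in>L'. fsum a b \<in> L'"
      proof (intro ballI)
        fix a b assume "a \<in> H" "b \<in> L'"
        then obtain h where h: "h \<in> H" "b = fsum h e" unfolding L'_def by blast
        have "fsum a b = fsum (fsum a h) e" using h by (simp add: fsum_assoc)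
        moreover have "fsum a h \<in> H" using H(2) h \<open>a \<in> H\<close> by blast
        ultimately show "fsum a b \<in> L'" unfolding L'_def by blast
      qed
    qed
    moreover have "L' \<subseteq> L" unfolding L'_def using Lid e by blast
    ultimately have "L' = L" using min by blast
    then show ?thesis using l unfolding L'_def by blast
  qed
  have idem: "\<exists>p\<in>L \<inter> Hi. fsum p p = p"
    if Hi: "Hi \<subseteq> H" "Ucl Hi" "Hi \<noteq> {}" "\<forall>a\<in>Hi. \<forall>b\<in>H. fsum a b \<in> Hi" for Hi
  proof (rule Ellis)
    show "Ucl (L \<inter> Hi)" using Ucl_Int Lcl Hi(2) by blast
    obtain e where e: "e \<in> L" using Lne by blast
    obtain q where q: "q \<in> Hi" using Hi(3) by blast
    have "fsum q e \<in> L" using Lid e q Hi(1) by blast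
    moreover have "fsum q e \<in> Hi" using Hi(4) q e LH by blast
    ultimately show "L \<inter> Hi \<noteq> {}" by blast
    show "\<forall>a\<in>L \<inter> Hi. \<forall>b\<in>L \<inter> Hi. fsum a b \<in> L \<inter> Hi"
    proof (intro ballI)
      fix a b assume "a \<in> L \<inter> Hi" "b \<in> L \<inter> Hi"
      then show "fsum a b \<in> L \<inter> Hi" using Lid Hi(1,4) LH by blast
    qed
  qed
  obtain p1 where p1: "p1 \<in> L" "p1 \<in> H1" "fsum p1 p1 = p1" using idem[OF H1] by blast
  obtain p2 where p2: "p2 \<in> L" "p2 \<in> H2" "fsum p2 p2 = p2" using idem[OF H2] by blast
  obtain s where s: "s \<in> H" "p1 = fsum s p2" using gen[OF p2(1) p1(1)] by blast
  obtain t where t: "t \<in> H" "p2 = fsum t p1" using gen[OF p1(1) p2(1)] by blast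
  have "fsum p1 p2 = p1" using s p2(3) by (metis fsum_assoc)
  moreover have "fsum p2 p1 = p2" using t p1(3) by (metis fsum_assoc)
  ultimately show ?thesis using p1 p2 by blast
qed


definition D1 :: "int \<Rightarrow> bool" where "D1 n \<longleftrightarrow> (\<exists>j::nat. n mod 3^(Suc j) = 3^j)"
definition D2 :: "int \<Rightarrow> bool" where "D2 n \<longleftrightarrow> (\<exists>j::nat. n mod 3^(Suc j) = 2*3^j)"

lemma mod_shift: "(c::int) dvd m \<Longrightarrow> (n + m) mod c = n mod c"
  by (metis mod_add_right_eq dvd_imp_mod_0 add.right_neutral)

lemma D1_shift: "D1 n \<Longrightarrow> \<exists>j::nat. \<forall>m. (3::int)^j dvd m \<longrightarrow> D1 (n+m)"
proof -
  assume "D1 n"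
  then obtain j :: nat where j: "n mod 3^(Suc j) = 3^j" unfolding D1_def by blast
  show ?thesis
  proof (intro exI[of _ "Suc j"] allI impI)
    fix m :: int assume "3^(Suc j) dvd m"
    then have "(n + m) mod 3^(Suc j) = 3^j" using j mod_shift by simp
    then show "D1 (n+m)" unfolding D1_def by blast
  qed
qed

lemma D2_shift: "D2 n \<Longrightarrow> \<exists>j::nat. \<forall>m. (3::int)^j dvd m \<longrightarrow> D2 (n+m)"
proof -
  assume "D2 n"
  then obtain j :: nat where j: "n mod 3^(Suc j) = 2*3^j" unfolding D2_def by blast
  show ?thesis
  proof (intro exI[of _ "Suc j"] allI impI)
    fix m :: int assume "3^(Suc j) dvd m"
    then have "(n + m) mod 3^(Suc j) = 2*3^j" using j mod_shift by simp
    then show "D2 (n+m)" unfolding D2_def by blast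
  qed
qed

lemma D1_ex: "\<exists>n. (3::int)^k dvd n \<and> D1 n"
proof -
  have a: "(0::int) \<le> 3^k" by simp
  have b: "(3::int)^k < 3^(Suc k)" by simp
  have "(3::int)^k mod 3^(Suc k) = 3^k" using mod_pos_pos_trivial[OF a b] .
  then have "D1 (3^k)" unfolding D1_def by blast
  then show ?thesis by (intro exI[of _ "3^k"]) simp
qed

lemma D2_ex: "\<exists>n. (3::int)^k dvd n \<and> D2 n"
proof -
  have a: "(0::int) \<le> 2 * 3^k" by simp
  have b: "2 * (3::int)^k < 3^(Suc k)" by simp
  have "(2 * (3::int)^k) mod 3^(Suc k) = 2 * 3^k" using mod_pos_pos_trivial[OF a b] .
  then have "D2 (2 * 3^k)" unfolding D2_def by blast
  then show ?thesis by (intro exI[of _ "2 * 3^k"]) simp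
qed

lemma D_disj: "D1 n \<Longrightarrow> D2 n \<Longrightarrow> False"
proof -
  assume "D1 n" "D2 n"
  then obtain i j :: nat where i: "n mod 3^(Suc i) = 3^i" and j: "n mod 3^(Suc j) = 2*3^j"
    unfolding D1_def D2_def by blast
  consider "i = j" | "i < j" | "j < i" by linarith
  then show False
  proof cases
    case 1 then show False using i j by simp
  next
    case 2
    have dv: "(3::int)^(Suc i) dvd 3^(Suc j)" using 2 by (simp add: le_imp_power_dvd)
    have "n mod 3^(Suc i) = (n mod 3^(Suc j)) mod 3^(Suc i)" using dv by (simp add: mod_mod_cancel)
    also have "\<dots> = (2 * 3^j) mod 3^(Suc i)" using j by simp
    also have "\<dots> = 0"
    proof -
      have "(3::int)^(Suc i) dvd 3^j" by (rule le_imp_power_dvd) (use 2 in simp)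
      then show ?thesis by simp
    qed
    finally show False using i by simp
  next
    case 3
    have dv: "(3::int)^(Suc j) dvd 3^(Suc i)" using 3 by (simp add: le_imp_power_dvd)
    have "n mod 3^(Suc j) = (n mod 3^(Suc i)) mod 3^(Suc j)" using dv by (simp add: mod_mod_cancel)
    also have "\<dots> = 3^i mod 3^(Suc j)" using i by simp
    also have "\<dots> = 0"
    proof -
      have "(3::int)^(Suc j) dvd 3^i" by (rule le_imp_power_dvd) (use 3 in simp)
      then show ?thesis by simp
    qed
    finally show False using j by simp
  qed
qed

lemma Ucl_ev: "Ucl {U. ultra U \<and> (\<forall>k. eventually (P k) U)}"
  unfolding Ucl_def by auto

definition HH :: "int filter set" where
  "HH = {U. ultra U \<and> (\<forall>k::nat. eventually (\<lambda>n. (3::int)^k dvd n) U)}"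

lemma HH_ucl: "Ucl HH"
  unfolding HH_def by (rule Ucl_ev)

lemma HH_sg: "\<forall>a\<in>HH. \<forall>b\<in>HH. fsum a b \<in> HH"
proof (intro ballI)
  fix a b assume a: "a \<in> HH" and b: "b \<in> HH"
  have "ultra (fsum a b)" using a b ultra_fsum unfolding HH_def by blast
  moreover have "eventually (\<lambda>n. (3::int)^k dvd n) (fsum a b)" for k :: nat
  proof -
    have ea: "eventually (\<lambda>n. (3::int)^k dvd n) a" using a unfolding HH_def by blast
    have eb: "eventually (\<lambda>n. (3::int)^k dvd n) b" using b unfolding HH_def by blast
    have "eventually (\<lambda>n. eventually (\<lambda>m. (3::int)^k dvd (n+m)) b) a"
      using ea
    proof (rule eventually_mono)
      fix n :: int assume "3^k dvd n"
      show "eventually (\<lambda>m. (3::int)^k dvd (n+m)) b"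
        using eb by (rule eventually_mono) (simp add: \<open>3^k dvd n\<close>)
    qed
    then show ?thesis by (simp add: eventually_fsum)
  qed
  ultimately show "fsum a b \<in> HH" unfolding HH_def by blast
qed

lemma Hi_props:
  fixes D :: "int \<Rightarrow> bool"
  assumes shift: "\<And>n. D n \<Longrightarrow> \<exists>j::nat. \<forall>m. (3::int)^j dvd m \<longrightarrow> D (n+m)"
    and ex: "\<And>k::nat. \<exists>n. (3::int)^k dvd n \<and> D n"
  defines "Hi \<equiv> HH \<inter> {U. ultra U \<and> (\<forall>k::nat. eventually D U)}"
  shows "Hi \<subseteq> HH" "Ucl Hi" "Hi \<noteq> {}" "\<forall>a\<in>Hi. \<forall>b\<in>HH. fsum a b \<in> Hi"
proof -
  show "Hi \<subseteq> HH" unfolding Hi_def by blast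
  show "Ucl Hi" unfolding Hi_def using Ucl_Int[OF HH_ucl Ucl_ev] .
  show "Hi \<noteq> {}"
  proof -
    define GP where "GP = (\<lambda>Q. \<exists>k::nat. \<forall>n. (3::int)^k dvd n \<and> D n \<longrightarrow> Q n)"
    have isf: "is_filter GP" unfolding GP_def
    proof
      show "\<exists>k::nat. \<forall>n. (3::int)^k dvd n \<and> D n \<longrightarrow> True" by blast
    next
      fix P Q
      assume "\<exists>k::nat. \<forall>n. (3::int)^k dvd n \<and> D n \<longrightarrow> P n"
        "\<exists>k::nat. \<forall>n. (3::int)^k dvd n \<and> D n \<longrightarrow> Q n"
      then obtain k1 k2 :: nat where k1: "\<forall>n. (3::int)^k1 dvd n \<and> D n \<longrightarrow> P n"
        and k2: "\<forall>n. (3::int)^k2 dvd n \<and> D n \<longrightarrow> Q n" by blast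
      have d1: "(3::int)^k1 dvd 3^(max k1 k2)" by (simp add: le_imp_power_dvd)
      have d2: "(3::int)^k2 dvd 3^(max k1 k2)" by (simp add: le_imp_power_dvd)
      show "\<exists>k::nat. \<forall>n. (3::int)^k dvd n \<and> D n \<longrightarrow> P n \<and> Q n"
      proof (intro exI[of _ "max k1 k2"] allI impI)
        fix n :: int assume n: "3^(max k1 k2) dvd n \<and> D n"
        have "3^k1 dvd n" using dvd_trans[OF d1] n by blast
        moreover have "3^k2 dvd n" using dvd_trans[OF d2] n by blast
        ultimately show "P n \<and> Q n" using k1 k2 n by blast
      qed
    next
      fix P Q
      assume "\<forall>x. P x \<longrightarrow> Q x" "\<exists>k::nat. \<forall>n. (3::int)^k dvd n \<and> D n \<longrightarrow> P n"
      then show "\<exists>k::nat. \<forall>n. (3::int)^k dvd n \<and> D n \<longrightarrow> Q n" by blast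
    qed
    define G where "G = Abs_filter GP"
    have evG: "eventually Q G \<longleftrightarrow> GP Q" for Q unfolding G_def using eventually_Abs_filter[OF isf] .
    have "G \<noteq> bot"
    proof
      assume "G = bot"
      then have "GP (\<lambda>x. False)" using evG by (metis eventually_bot)
      then obtain k :: nat where "\<forall>n. (3::int)^k dvd n \<and> D n \<longrightarrow> False" unfolding GP_def by blast
      then show False using ex[of k] by blast
    qed
    then obtain U where U: "ultra U" "U \<le> G" using ultra_exists by blast
    have "eventually (\<lambda>n. (3::int)^k dvd n) U" for k :: nat
    proof -
      have "GP (\<lambda>n. (3::int)^k dvd n)" unfolding GP_def by blast
      then show ?thesis using evG U(2) filter_leD by blast
    qed
    moreover have "eventually D U"
    proof -
      have "GP D" unfolding GP_def by blast
      then show ?thesis using evG U(2) filter_leD by blast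
    qed
    ultimately have "U \<in> Hi" unfolding Hi_def HH_def using U(1) by blast
    then show ?thesis by blast
  qed
  show "\<forall>a\<in>Hi. \<forall>b\<in>HH. fsum a b \<in> Hi"
  proof (intro ballI)
    fix a b assume a: "a \<in> Hi" and b: "b \<in> HH"
    have "fsum a b \<in> HH" using HH_sg a b unfolding Hi_def by blast
    moreover have "eventually D (fsum a b)"
    proof -
      have ea: "eventually D a" using a unfolding Hi_def by blast
      have "eventually (\<lambda>n. eventually (\<lambda>m. D (n+m)) b) a"
        using ea
      proof (rule eventually_mono)
        fix n assume "D n"
        then obtain j :: nat where j: "\<forall>m. (3::int)^j dvd m \<longrightarrow> D (n+m)" using shift by blast
        have "eventually (\<lambda>m. (3::int)^j dvd m) b" using b unfolding HH_def by blast
        then show "eventually (\<lambda>m. D (n+m)) b" by (rule eventually_mono) (simp add: j)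
      qed
      then show ?thesis by (simp add: eventually_fsum)
    qed
    moreover have "ultra (fsum a b)" using calculation(1) unfolding HH_def by blast
    ultimately show "fsum a b \<in> Hi" unfolding Hi_def by blast
  qed
qed

theorem exists_pair:
  "\<exists>p1 p2. ultra p1 \<and> ultra p2 \<and>
     (\<forall>k::nat. eventually (\<lambda>n. (3::int)^k dvd n) p1) \<and>
     (\<forall>k::nat. eventually (\<lambda>n. (3::int)^k dvd n) p2) \<and>
     eventually D1 p1 \<and> eventually D2 p2 \<and> fsum p1 p2 = p1 \<and> fsum p2 p1 = p2"
proof -
  note A = Hi_props[of D1, OF D1_shift D1_ex]
  note B = Hi_props[of D2, OF D2_shift D2_ex]
  obtain p1 p2 where "p1 \<in> HH \<inter> {U. ultra U \<and> (\<forall>k::nat. eventually D1 U)}"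
      "p2 \<in> HH \<inter> {U. ultra U \<and> (\<forall>k::nat. eventually D2 U)}"
      "fsum p1 p2 = p1 \<and> fsum p2 p1 = p2"
    using left_zero_pair[OF HH_ucl HH_sg A B] by blast
  then show ?thesis unfolding HH_def by blast
qed


definition bdd :: "(int \<Rightarrow> complex) \<Rightarrow> real \<Rightarrow> bool" where
  "bdd x M \<longleftrightarrow> (\<forall>n. norm (x n) \<le> M)"

lemma ultra_tendsto_ex:
  assumes U: "ultra F" and b: "bdd x M"
  shows "\<exists>c. (x \<longlongrightarrow> c) F"
proof -
  define F' where "F' = filtermap x F"
  have "F \<noteq> bot" using U unfolding ultra_def by blast
  then have "F' \<noteq> bot" unfolding F'_def by (simp add: filtermap_bot_iff)
  moreover have "eventually (\<lambda>z. z \<in> cball 0 M) F'"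
    unfolding F'_def eventually_filtermap using b unfolding bdd_def by simp
  ultimately obtain c where c: "c \<in> cball 0 M" "inf (nhds c) F' \<noteq> bot"
    using compact_cball[of "0::complex" M] unfolding compact_filter by blast
  have "(x \<longlongrightarrow> c) F"
    unfolding tendsto_def
  proof (intro allI impI)
    fix S assume S: "open S" "c \<in> S"
    show "eventually (\<lambda>n. x n \<in> S) F"
    proof (rule ccontr)
      assume "\<not> eventually (\<lambda>n. x n \<in> S) F"
      then have "eventually (\<lambda>n. \<not> x n \<in> S) F" using U ultra_not_ev by blast
      then have e1: "eventually (\<lambda>z. z \<notin> S) F'" unfolding F'_def eventually_filtermap by simp
      have e2: "eventually (\<lambda>z. z \<in> S) (nhds c)" using S eventually_nhds by blast
      have "eventually (\<lambda>z. False) (inf (nhds c) F')"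
        unfolding eventually_inf using e1 e2 by blast
      then show False using c(2) by (simp add: eventually_False)
    qed
  qed
  then show ?thesis by blast
qed

lemma ultra_Lim:
  assumes U: "ultra F" and b: "bdd x M"
  shows "(x \<longlongrightarrow> Lim F x) F"
proof -
  obtain c where c: "(x \<longlongrightarrow> c) F" using ultra_tendsto_ex[OF U b] by blast
  have "F \<noteq> bot" using U unfolding ultra_def by blast
  then have "Lim F x = c" using c tendsto_Lim by blast
  then show ?thesis using c by simp
qed

lemma ultra_Lim_eq:
  assumes U: "ultra F" and c: "(x \<longlongrightarrow> c) F"
  shows "Lim F x = c"
proof -
  have "F \<noteq> bot" using U unfolding ultra_def by blast
  then show ?thesis using c tendsto_Lim by blast
qed

lemma ultra_Lim_bdd:
  assumes U: "ultra F" and b: "bdd x M"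
  shows "norm (Lim F x) \<le> M"
proof -
  have "Lim F x \<in> cball 0 M"
  proof (rule Lim_in_closed_set[OF closed_cball])
    show "eventually (\<lambda>n. x n \<in> cball 0 M) F" using b unfolding bdd_def by simp
    show "F \<noteq> bot" using U unfolding ultra_def by blast
    show "(x \<longlongrightarrow> Lim F x) F" using ultra_Lim[OF U b] .
  qed
  then show ?thesis by simp
qed

lemma ultra_Lim_fsum:
  assumes F: "ultra F" and G: "ultra G" and b: "bdd x M"
  shows "Lim (fsum F G) x = Lim F (\<lambda>n. Lim G (\<lambda>m. x (n+m)))"
proof -
  define y where "y = (\<lambda>n. Lim G (\<lambda>m. x (n+m)))"
  have hb: "bdd (\<lambda>m. x (n+m)) M" for n using b unfolding bdd_def by simp
  have yt: "((\<lambda>m. x (n+m)) \<longlongrightarrow> y n) G" for n unfolding y_def using ultra_Lim[OF G hb] .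
  have yb: "bdd y M" unfolding bdd_def y_def using ultra_Lim_bdd[OF G hb] by blast
  define c where "c = Lim F y"
  have ct: "(y \<longlongrightarrow> c) F" unfolding c_def using ultra_Lim[OF F yb] .
  have "(x \<longlongrightarrow> c) (fsum F G)"
    unfolding tendsto_iff
  proof (intro allI impI)
    fix e :: real assume e: "e > 0"
    have e2: "e/2 > 0" using e by simp
    have "eventually (\<lambda>n. dist (y n) c < e/2) F" using ct e2 unfolding tendsto_iff by blast
    then have "eventually (\<lambda>n. eventually (\<lambda>m. dist (x (n+m)) c < e) G) F"
    proof (rule eventually_mono)
      fix n assume n: "dist (y n) c < e/2"
      have "eventually (\<lambda>m. dist (x (n+m)) (y n) < e/2) G" using yt[of n] e2 unfolding tendsto_iff by blast
      then show "eventually (\<lambda>m. dist (x (n+m)) c < e) G"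
      proof (rule eventually_mono)
        fix m assume "dist (x (n+m)) (y n) < e/2"
        moreover have "dist (x (n+m)) c \<le> dist (x (n+m)) (y n) + dist (y n) c" by (rule dist_triangle)
        ultimately show "dist (x (n+m)) c < e" using n by linarith
      qed
    qed
    then show "eventually (\<lambda>k. dist (x k) c < e) (fsum F G)" by (simp add: eventually_fsum)
  qed
  then have "Lim (fsum F G) x = c" using ultra_Lim_eq ultra_fsum[OF F G] by blast
  then show ?thesis unfolding c_def y_def .
qed

lemma ultra_Lim_add:
  assumes U: "ultra F" and a: "bdd x M" and b: "bdd y N"
  shows "Lim F (\<lambda>n. x n + y n) = Lim F x + Lim F y"
  using ultra_Lim_eq[OF U tendsto_add[OF ultra_Lim[OF U a] ultra_Lim[OF U b]]] .

lemma ultra_Lim_cmult: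
  assumes U: "ultra F" and a: "bdd x M"
  shows "Lim F (\<lambda>n. c * x n) = c * Lim F x"
  using ultra_Lim_eq[OF U tendsto_mult[OF tendsto_const ultra_Lim[OF U a]]] .

lemma ultra_Lim_const:
  assumes U: "ultra F" shows "Lim F (\<lambda>n. c) = c"
  using ultra_Lim_eq[OF U tendsto_const] .

lemma ultra_Lim_ev:
  assumes U: "ultra F" and "eventually (\<lambda>n. x n = c) F" shows "Lim F x = c"
  using ultra_Lim_eq[OF U tendsto_eventually[OF assms(2)]] .

lemma linf_bdd: "x \<in> linf \<Longrightarrow> \<exists>M. bdd x M"
  unfolding linf_def bdd_def by blast


definition Phi :: "int filter \<Rightarrow> int filter \<Rightarrow> (int \<Rightarrow> complex) \<Rightarrow> int \<Rightarrow> complex" where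
  "Phi p q x n = (Lim p (\<lambda>m. x (n+m)) + Lim q (\<lambda>m. x (n+m))) / 2"

lemma bdd_shift: "bdd x M \<Longrightarrow> bdd (\<lambda>m. x (n+m)) M"
  unfolding bdd_def by simp

lemma half_norm: "norm a \<le> M \<Longrightarrow> norm b \<le> M \<Longrightarrow> norm ((a + b) / 2 :: complex) \<le> M"
proof -
  assume "norm a \<le> M" "norm b \<le> M"
  moreover have "norm (a + b) \<le> norm a + norm b" by (rule norm_triangle_ineq)
  moreover have "norm ((a + b) / 2) = norm (a + b) / 2" by (simp add: norm_divide)
  ultimately show ?thesis by linarith
qed

lemma Phi_bdd: "ultra p \<Longrightarrow> ultra q \<Longrightarrow> bdd x M \<Longrightarrow> bdd (Phi p q x) M"
  unfolding bdd_def Phi_def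
  using half_norm ultra_Lim_bdd bdd_shift unfolding bdd_def by metis

lemma Lim_half:
  assumes U: "ultra r" and a: "bdd a M" and b: "bdd b N"
  shows "Lim r (\<lambda>m. (a m + b m) / 2) = (Lim r a + Lim r b) / 2"
proof -
  have ab: "bdd (\<lambda>m. a m + b m) (M + N)" using a b unfolding bdd_def
    by (meson add_mono norm_triangle_ineq order_trans)
  have "Lim r (\<lambda>m. (a m + b m) / 2) = Lim r (\<lambda>m. (1/2) * (a m + b m))" by simp
  also have "\<dots> = (1/2) * Lim r (\<lambda>m. a m + b m)" using ultra_Lim_cmult[OF U ab] .
  also have "\<dots> = (1/2) * (Lim r a + Lim r b)" using ultra_Lim_add[OF U a b] by simp
  finally show ?thesis by simp
qed

lemma Lim_absorb:
  assumes r: "ultra r" and s: "ultra s" and rs: "fsum r s = r" and b: "bdd x M"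
  shows "Lim r (\<lambda>m. Lim s (\<lambda>t. x (n + m + t))) = Lim r (\<lambda>m. x (n+m))"
proof -
  have "Lim (fsum r s) (\<lambda>k. x (n+k)) = Lim r (\<lambda>m. Lim s (\<lambda>t. x (n + (m + t))))"
    using ultra_Lim_fsum[OF r s bdd_shift[OF b]] .
  then show ?thesis using rs by (simp add: add.assoc)
qed

lemma Phi_idem:
  assumes p: "ultra p" and q: "ultra q" and pq: "fsum p q = p" and qp: "fsum q p = q"
    and b: "bdd x M"
  shows "Phi p q (Phi p q x) = Phi p q x"
proof
  fix n
  have pp: "fsum p p = p" using pq qp by (metis fsum_assoc)
  have qq: "fsum q q = q" using pq qp by (metis fsum_assoc)
  have key: "Lim r (\<lambda>m. Phi p q x (n+m)) = Lim r (\<lambda>m. x (n+m))"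
    if r: "ultra r" and r1: "fsum r p = r" and r2: "fsum r q = r" for r
  proof -
    have bp: "bdd (\<lambda>m. Lim p (\<lambda>t. x (n + m + t))) M"
      unfolding bdd_def using ultra_Lim_bdd[OF p bdd_shift[OF b]] by blast
    have bq: "bdd (\<lambda>m. Lim q (\<lambda>t. x (n + m + t))) M"
      unfolding bdd_def using ultra_Lim_bdd[OF q bdd_shift[OF b]] by blast
    have "Lim r (\<lambda>m. Phi p q x (n+m)) =
        Lim r (\<lambda>m. (Lim p (\<lambda>t. x (n + m + t)) + Lim q (\<lambda>t. x (n + m + t))) / 2)"
      unfolding Phi_def by simp
    also have "\<dots> = (Lim r (\<lambda>m. Lim p (\<lambda>t. x (n + m + t))) + Lim r (\<lambda>m. Lim q (\<lambda>t. x (n + m + t)))) / 2"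
      using Lim_half[OF r bp bq] .
    also have "\<dots> = (Lim r (\<lambda>m. x (n+m)) + Lim r (\<lambda>m. x (n+m))) / 2"
      using Lim_absorb[OF r p r1 b] Lim_absorb[OF r q r2 b] by simp
    also have "\<dots> = Lim r (\<lambda>m. x (n+m))" by simp
    finally show ?thesis .
  qed
  show "Phi p q (Phi p q x) n = Phi p q x n"
    unfolding Phi_def[of p q "Phi p q x"]
    using key[OF p pp pq] key[OF q qp qq] unfolding Phi_def by simp
qed

lemma Phi_cp:
  assumes p: "ultra p" and q: "ultra q"
  shows "completely_positive (Phi p q)"
  unfolding completely_positive_def
proof (intro allI impI)
  fix k and x :: "nat \<Rightarrow> nat \<Rightarrow> int \<Rightarrow> complex"
  assume lx: "\<forall>i<k. \<forall>j<k. x i j \<in> linf" and pos: "mat_pos k x"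
  define K where "K = {z::complex. Im z = 0} \<inter> {z. Re z \<ge> 0}"
  have cK: "closed K" unfolding K_def
    by (intro closed_Int closed_halfspace_Im_eq closed_halfspace_Re_ge)
  show "mat_pos k (\<lambda>i j. Phi p q (x i j))"
    unfolding mat_pos_def
  proof (intro allI)
    fix m and v :: "nat \<Rightarrow> complex"
    define V where "V = (\<lambda>r. \<Sum>i<k. \<Sum>j<k. cnj (v i) * Lim r (\<lambda>t. x i j (m+t)) * v j)"
    have VK: "V r \<in> K" if r: "ultra r" for r
    proof (rule Lim_in_closed_set[OF cK])
      show "eventually (\<lambda>t. (\<Sum>i<k. \<Sum>j<k. cnj (v i) * x i j (m+t) * v j) \<in> K) r"
        using pos unfolding mat_pos_def K_def by simp
      show "r \<noteq> bot" using r unfolding ultra_def by blast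
      show "((\<lambda>t. \<Sum>i<k. \<Sum>j<k. cnj (v i) * x i j (m+t) * v j) \<longlongrightarrow> V r) r"
        unfolding V_def
      proof (intro tendsto_sum)
        fix i j assume "i \<in> {..<k}" "j \<in> {..<k}"
        then have "x i j \<in> linf" using lx by blast
        then obtain M where "bdd (x i j) M" using linf_bdd by blast
        then have "((\<lambda>t. x i j (m+t)) \<longlongrightarrow> Lim r (\<lambda>t. x i j (m+t))) r"
          using ultra_Lim[OF r bdd_shift] by blast
        then show "((\<lambda>t. cnj (v i) * x i j (m+t) * v j) \<longlongrightarrow> cnj (v i) * Lim r (\<lambda>t. x i j (m+t)) * v j) r"
          by (intro tendsto_mult tendsto_const)
      qed
    qed
    have eq: "(\<Sum>i<k. \<Sum>j<k. cnj (v i) * Phi p q (x i j) m * v j) = (V p + V q) / 2"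
    proof -
      have "(\<Sum>i<k. \<Sum>j<k. cnj (v i) * Phi p q (x i j) m * v j) =
          (\<Sum>i<k. \<Sum>j<k. (cnj (v i) * Lim p (\<lambda>t. x i j (m+t)) * v j + cnj (v i) * Lim q (\<lambda>t. x i j (m+t)) * v j) / 2)"
        unfolding Phi_def by (simp add: algebra_simps add_divide_distrib)
      also have "\<dots> = (V p + V q) / 2"
        unfolding V_def by (simp add: sum.distrib sum_divide_distrib add_divide_distrib)
      finally show ?thesis .
    qed
    show "Im (\<Sum>i<k. \<Sum>j<k. cnj (v i) * Phi p q (x i j) m * v j) = 0 \<and>
          0 \<le> Re (\<Sum>i<k. \<Sum>j<k. cnj (v i) * Phi p q (x i j) m * v j)"
      unfolding eq using VK[OF p] VK[OF q] unfolding K_def by simp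
  qed
qed


theorem theorem2p15:
  shows "\<exists>\<Phi> :: (int \<Rightarrow> complex) \<Rightarrow> (int \<Rightarrow> complex).
    linear_on_linf \<Phi> \<and>
    \<Phi> (\<lambda>n. 1) = (\<lambda>n. 1) \<and>
    completely_positive \<Phi> \<and>
    (\<forall>x\<in>linf. \<Phi> (\<Phi> x) = \<Phi> x) \<and>
    (\<forall>x\<in>linf. \<Phi> (bshift x) = bshift (\<Phi> x)) \<and>
    \<not> cstar_subalgebra (\<Phi> ` linf)"
proof -
  obtain p q where p: "ultra p" and q: "ultra q"
    and p3: "\<forall>k::nat. eventually (\<lambda>n. (3::int)^k dvd n) p"
    and q3: "\<forall>k::nat. eventually (\<lambda>n. (3::int)^k dvd n) q"
    and pD: "eventually D1 p" and qD: "eventually D2 q"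
    and pq: "fsum p q = p" and qp: "fsum q p = q"
    using exists_pair by blast
  define \<Phi> where "\<Phi> = Phi p q"
  have bdd_linf: "bdd y M \<Longrightarrow> y \<in> linf" for y M unfolding bdd_def linf_def by blast
  have lin: "linear_on_linf \<Phi>"
    unfolding linear_on_linf_def
  proof (intro conjI ballI allI)
    fix x assume "x \<in> linf"
    then obtain M where "bdd x M" using linf_bdd by blast
    then show "\<Phi> x \<in> linf" unfolding \<Phi>_def using Phi_bdd[OF p q] bdd_linf by blast
  next
    fix x y assume "x \<in> linf" "y \<in> linf"
    then obtain M N where M: "bdd x M" and N: "bdd y N" using linf_bdd by blast
    show "\<Phi> (\<lambda>n. x n + y n) = (\<lambda>n. \<Phi> x n + \<Phi> y n)"
    proof
      fix n
      have "Lim p (\<lambda>m. x (n+m) + y (n+m)) = Lim p (\<lambda>m. x (n+m)) + Lim p (\<lambda>m. y (n+m))"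
        using ultra_Lim_add[OF p bdd_shift[OF M] bdd_shift[OF N]] .
      moreover have "Lim q (\<lambda>m. x (n+m) + y (n+m)) = Lim q (\<lambda>m. x (n+m)) + Lim q (\<lambda>m. y (n+m))"
        using ultra_Lim_add[OF q bdd_shift[OF M] bdd_shift[OF N]] .
      ultimately show "\<Phi> (\<lambda>n. x n + y n) n = \<Phi> x n + \<Phi> y n"
        unfolding \<Phi>_def Phi_def by (simp add: add_divide_distrib)
    qed
  next
    fix c :: complex and x assume "x \<in> linf"
    then obtain M where M: "bdd x M" using linf_bdd by blast
    show "\<Phi> (\<lambda>n. c * x n) = (\<lambda>n. c * \<Phi> x n)"
    proof
      fix n
      have "Lim p (\<lambda>m. c * x (n+m)) = c * Lim p (\<lambda>m. x (n+m))"
        using ultra_Lim_cmult[OF p bdd_shift[OF M]] .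
      moreover have "Lim q (\<lambda>m. c * x (n+m)) = c * Lim q (\<lambda>m. x (n+m))"
        using ultra_Lim_cmult[OF q bdd_shift[OF M]] .
      ultimately show "\<Phi> (\<lambda>n. c * x n) n = c * \<Phi> x n"
        unfolding \<Phi>_def Phi_def by (simp add: algebra_simps add_divide_distrib)
    qed
  qed
  have unit: "\<Phi> (\<lambda>n. 1) = (\<lambda>n. 1)"
    unfolding \<Phi>_def Phi_def using ultra_Lim_const[OF p, of "1::complex"] ultra_Lim_const[OF q, of "1::complex"] by simp
  have cp: "completely_positive \<Phi>" unfolding \<Phi>_def using Phi_cp[OF p q] .
  have idem: "\<forall>x\<in>linf. \<Phi> (\<Phi> x) = \<Phi> x"
  proof
    fix x assume "x \<in> linf"
    then obtain M where M: "bdd x M" using linf_bdd by blast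
    show "\<Phi> (\<Phi> x) = \<Phi> x" unfolding \<Phi>_def using Phi_idem[OF p q pq qp M] .
  qed
  have equi: "\<forall>x\<in>linf. \<Phi> (bshift x) = bshift (\<Phi> x)"
  proof
    fix x :: "int \<Rightarrow> complex" assume "x \<in> linf"
    show "\<Phi> (bshift x) = bshift (\<Phi> x)"
    proof
      fix n
      have e: "(\<lambda>m. x (n + m + 1)) = (\<lambda>m. x (n + 1 + m))" by (simp add: algebra_simps)
      show "\<Phi> (bshift x) n = bshift (\<Phi> x) n"
        unfolding \<Phi>_def Phi_def bshift_def using e by simp
    qed
  qed
  have notc: "\<not> cstar_subalgebra (\<Phi> ` linf)"
  proof
    assume cs: "cstar_subalgebra (\<Phi> ` linf)"
    define x0 :: "int \<Rightarrow> complex" where "x0 = (\<lambda>n. if D1 n then 1 else 0)"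
    have bx0: "bdd x0 1" unfolding bdd_def x0_def by simp
    have x0l: "x0 \<in> linf" using bdd_linf[OF bx0] .
    define y where "y = \<Phi> x0"
    have y1: "y n = 1" if hn: "D1 n" for n
    proof -
      obtain j :: nat where j: "\<forall>m. (3::int)^j dvd m \<longrightarrow> D1 (n+m)" using D1_shift[OF hn] by blast
      have L: "Lim r (\<lambda>m. x0 (n+m)) = 1" if r: "ultra r" "eventually (\<lambda>m. (3::int)^j dvd m) r" for r
      proof (rule ultra_Lim_ev[OF r(1)])
        show "eventually (\<lambda>m. x0 (n+m) = 1) r" using r(2) by (rule eventually_mono) (simp add: x0_def j)
      qed
      show ?thesis unfolding y_def \<Phi>_def Phi_def using L[OF p] L[OF q] p3 q3 by simp
    qed
    have y0: "y n = 0" if hn: "D2 n" for n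
    proof -
      obtain j :: nat where j: "\<forall>m. (3::int)^j dvd m \<longrightarrow> D2 (n+m)" using D2_shift[OF hn] by blast
      have L: "Lim r (\<lambda>m. x0 (n+m)) = 0" if r: "ultra r" "eventually (\<lambda>m. (3::int)^j dvd m) r" for r
      proof (rule ultra_Lim_ev[OF r(1)])
        show "eventually (\<lambda>m. x0 (n+m) = 0) r" using r(2)
          by (rule eventually_mono) (use j D_disj in \<open>auto simp: x0_def\<close>)
      qed
      show ?thesis unfolding y_def \<Phi>_def Phi_def using L[OF p] L[OF q] p3 q3 by simp
    qed
    have yz: "y 0 = 1/2"
    proof -
      have "Lim p (\<lambda>m. x0 (0+m)) = 1"
        by (rule ultra_Lim_ev[OF p]) (use pD in \<open>rule eventually_mono\<close>, simp add: x0_def)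
      moreover have "Lim q (\<lambda>m. x0 (0+m)) = 0"
        by (rule ultra_Lim_ev[OF q]) (use qD in \<open>rule eventually_mono\<close>, use D_disj in \<open>auto simp: x0_def\<close>)
      ultimately show ?thesis unfolding y_def \<Phi>_def Phi_def by simp
    qed
    have yr: "y \<in> \<Phi> ` linf" unfolding y_def using x0l by blast
    then have "(\<lambda>n. y n * y n) \<in> \<Phi> ` linf" using cs unfolding cstar_subalgebra_def by blast
    then obtain z where z: "z \<in> linf" "(\<lambda>n. y n * y n) = \<Phi> z" by blast
    then have fix2: "\<Phi> (\<lambda>n. y n * y n) = (\<lambda>n. y n * y n)" using idem by simp
    have "\<Phi> (\<lambda>n. y n * y n) 0 = 1/2"
    proof -
      have "Lim p (\<lambda>m. y (0+m) * y (0+m)) = 1"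
        by (rule ultra_Lim_ev[OF p]) (use pD in \<open>rule eventually_mono\<close>, simp add: y1)
      moreover have "Lim q (\<lambda>m. y (0+m) * y (0+m)) = 0"
        by (rule ultra_Lim_ev[OF q]) (use qD in \<open>rule eventually_mono\<close>, simp add: y0)
      ultimately show ?thesis unfolding \<Phi>_def Phi_def by simp
    qed
    moreover have "\<Phi> (\<lambda>n. y n * y n) 0 = 1/4" using fix2 yz by (metis power2_eq_square power_divide one_power2 numeral_Bit0_eq_double)
    ultimately show False by simp
  qed
  show ?thesis using lin unit cp idem equi notc by blast
qed

end
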